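(* Assume $b_1<n^*$ and $b_2<m^*$. Then in every Nash equilibrium $(\sigma^{1*},\sigma^{2*})$ of $\Gamma(b_1,b_2)$, the node basis of $\sigma^{1*}$ is a set cover. Furthermore, $\Gamma(b_1,b_2)$ has no Nash equilibrium in which $\sigma^{1*}$ or $\sigma^{2*}$ is a point mass (both players must randomize).
   Context: Detection model: finite nonempty sets $\mathcal V$, $\mathcal E$, monitoring sets $\mathcal C_i\subseteq\mathcal E$ ($i\in\mathcal V$) with every $e\in\mathcal E$ in some $\mathcal C_i$; $\mathcal C_S=\bigcup_{i\in S}\mathcal C_i$; $F(S,T)=|\mathcal C_S\cap T|$. Set cover: $S\subseteq\mathcal V$ with $\mathcal C_S=\mathcal E$; $n^*$ = minimum size of a set cover. Set packing: $T\subseteq\mathcal E$ with $|\mathcal C_i\cap T|\le1$ for all $i$; $m^*$ = maximum size of a set packing. Game $\Gamma(b_1,b_2)$ ($b_1,b_2$ positive integers): $\mathcal A_1=\{S\subseteq\mathcal V:|S|\le b_1\}$, $\mathcal A_2=\{T\subseteq\mathcal E:|T|\le b_2\}$; mixed strategies $\sigma^1\in\Delta(\mathcal A_1)$, $\sigma^2\in\Delta(\mathcal A_2)$ (independent); payoffs $U_1=\mathbb E[F(S,T)]$, $U_2=\mathbb E[|T|]-\mathbb E[F(S,T)]$; Nash equilibrium in mixed strategies as usual. The node basis of $\sigma^1$ is $\{i\in\mathcal V:\mathbb P_{S\sim\sigma^1}(i\in S)>0\}$. *)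

theory Defs
  imports "HOL-Probability.Probability"
begin

definition detection_model :: "'v set \<Rightarrow> 'e set \<Rightarrow> ('v \<Rightarrow> 'e set) \<Rightarrow> bool" where
  "detection_model V E C \<longleftrightarrow> finite V \<and> finite E \<and> V \<noteq> {} \<and> E \<noteq> {} \<and>
     (\<forall>i\<in>V. C i \<subseteq> E) \<and> (\<forall>e\<in>E. \<exists>i\<in>V. e \<in> C i)"

definition covered :: "('v \<Rightarrow> 'e set) \<Rightarrow> 'v set \<Rightarrow> 'e set" where
  "covered C S = (\<Union>i\<in>S. C i)"

definition detF :: "('v \<Rightarrow> 'e set) \<Rightarrow> 'v set \<Rightarrow> 'e set \<Rightarrow> nat" where
  "detF C S T = card (covered C S \<inter> T)"

definition is_set_cover :: "'v set \<Rightarrow> 'e set \<Rightarrow> ('v \<Rightarrow> 'e set) \<Rightarrow> 'v set \<Rightarrow> bool" where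
  "is_set_cover V E C S \<longleftrightarrow> S \<subseteq> V \<and> covered C S = E"

definition is_set_packing :: "'v set \<Rightarrow> 'e set \<Rightarrow> ('v \<Rightarrow> 'e set) \<Rightarrow> 'e set \<Rightarrow> bool" where
  "is_set_packing V E C T \<longleftrightarrow> T \<subseteq> E \<and> (\<forall>i\<in>V. card (C i \<inter> T) \<le> 1)"

definition n_star :: "'v set \<Rightarrow> 'e set \<Rightarrow> ('v \<Rightarrow> 'e set) \<Rightarrow> nat" where
  "n_star V E C = Min (card ` {S. is_set_cover V E C S})"

definition m_star :: "'v set \<Rightarrow> 'e set \<Rightarrow> ('v \<Rightarrow> 'e set) \<Rightarrow> nat" where
  "m_star V E C = Max (card ` {T. is_set_packing V E C T})"

definition A1 :: "'v set \<Rightarrow> nat \<Rightarrow> 'v set set" where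
  "A1 V b1 = {S. S \<subseteq> V \<and> card S \<le> b1}"

definition A2 :: "'e set \<Rightarrow> nat \<Rightarrow> 'e set set" where
  "A2 E b2 = {T. T \<subseteq> E \<and> card T \<le> b2}"

definition mixed :: "'a set \<Rightarrow> 'a pmf set" where
  "mixed A = {\<sigma>. set_pmf \<sigma> \<subseteq> A}"

definition U1 :: "('v \<Rightarrow> 'e set) \<Rightarrow> 'v set pmf \<Rightarrow> 'e set pmf \<Rightarrow> real" where
  "U1 C \<sigma>1 \<sigma>2 = measure_pmf.expectation (pair_pmf \<sigma>1 \<sigma>2) (\<lambda>(S, T). real (detF C S T))"

definition U2 :: "('v \<Rightarrow> 'e set) \<Rightarrow> 'v set pmf \<Rightarrow> 'e set pmf \<Rightarrow> real" where
  "U2 C \<sigma>1 \<sigma>2 = measure_pmf.expectation (pair_pmf \<sigma>1 \<sigma>2) (\<lambda>(S, T). real (card T))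
                 - U1 C \<sigma>1 \<sigma>2"

definition nash_eq :: "'v set \<Rightarrow> 'e set \<Rightarrow> ('v \<Rightarrow> 'e set) \<Rightarrow> nat \<Rightarrow> nat
                        \<Rightarrow> 'v set pmf \<Rightarrow> 'e set pmf \<Rightarrow> bool" where
  "nash_eq V E C b1 b2 \<sigma>1 \<sigma>2 \<longleftrightarrow>
     \<sigma>1 \<in> mixed (A1 V b1) \<and> \<sigma>2 \<in> mixed (A2 E b2) \<and>
     (\<forall>\<tau>\<in>mixed (A1 V b1). U1 C \<tau> \<sigma>2 \<le> U1 C \<sigma>1 \<sigma>2) \<and>
     (\<forall>\<tau>\<in>mixed (A2 E b2). U2 C \<sigma>1 \<tau> \<le> U2 C \<sigma>1 \<sigma>2)"

definition node_basis :: "'v set \<Rightarrow> 'v set pmf \<Rightarrow> 'v set" where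
  "node_basis V \<sigma>1 = {i\<in>V. measure_pmf.prob \<sigma>1 {S. i \<in> S} > 0}"

end

theory Submission imports Defs begin

lemma expect_sum:
  assumes "finite P1" "finite P2" "set_pmf s1 \<subseteq> P1" "set_pmf s2 \<subseteq> P2"
  shows "measure_pmf.expectation (pair_pmf s1 s2) f
         = (\<Sum>S\<in>P1. \<Sum>T\<in>P2. pmf s1 S * pmf s2 T * f (S,T))"
proof -
  have "measure_pmf.expectation (pair_pmf s1 s2) f = (\<Sum>x\<in>P1\<times>P2. f x * pmf (pair_pmf s1 s2) x)"
    using assms by (intro integral_measure_pmf_real) auto
  also have "\<dots> = (\<Sum>x\<in>P1\<times>P2. pmf s1 (fst x) * pmf s2 (snd x) * f x)"
    by (rule sum.cong) (auto simp: pmf_pair)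
  also have "\<dots> = (\<Sum>S\<in>P1. \<Sum>T\<in>P2. pmf s1 S * pmf s2 T * f (S,T))"
    by (simp add: sum.cartesian_product split_def)
  finally show ?thesis .
qed

lemma card_as_sum:
  assumes "finite A"
  shows "real (card (A \<inter> T)) = (\<Sum>e\<in>A. if e \<in> T then 1 else 0)"
  using assms by (simp add: sum.If_cases Int_def)

locale game =
  fixes V :: "'v set" and E :: "'e set" and C :: "'v \<Rightarrow> 'e set" and b1 b2 :: nat
    and \<sigma>1 :: "'v set pmf" and \<sigma>2 :: "'e set pmf"
  assumes dm: "detection_model V E C"
    and b1pos: "0 < b1" and b2pos: "0 < b2"
    and nstar: "b1 < n_star V E C" and mstar: "b2 < m_star V E C"
    and ne: "nash_eq V E C b1 b2 \<sigma>1 \<sigma>2"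
begin

abbreviation "P1 \<equiv> A1 V b1"
abbreviation "P2 \<equiv> A2 E b2"

definition r :: "'e \<Rightarrow> real" where
  "r e = (\<Sum>T\<in>P2. pmf \<sigma>2 T * (if e \<in> T then 1 else 0))"
definition p :: "'e \<Rightarrow> real" where
  "p e = (\<Sum>S\<in>P1. pmf \<sigma>1 S * (if e \<in> covered C S then 1 else 0))"
definition g :: "'v set \<Rightarrow> real" where
  "g S = (\<Sum>e\<in>covered C S. r e)"
definition h :: "'e set \<Rightarrow> real" where
  "h T = (\<Sum>e\<in>T. (1 - p e))"

lemma finV: "finite V" and finE: "finite E" and CE: "\<And>i. i \<in> V \<Longrightarrow> C i \<subseteq> E"
  and cov: "\<And>e. e \<in> E \<Longrightarrow> \<exists>i\<in>V. e \<in> C i"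
  using dm by (auto simp: detection_model_def)

lemma fin1: "finite P1"
  by (rule finite_subset[of _ "Pow V"]) (auto simp: A1_def finV)
lemma fin2: "finite P2"
  by (rule finite_subset[of _ "Pow E"]) (auto simp: A2_def finE)

lemma P1D: "S \<in> P1 \<Longrightarrow> S \<subseteq> V \<and> finite S \<and> card S \<le> b1"
  using finV by (auto simp: A1_def intro: finite_subset)
lemma P2D: "T \<in> P2 \<Longrightarrow> T \<subseteq> E \<and> finite T \<and> card T \<le> b2"
  using finE by (auto simp: A2_def intro: finite_subset)

lemma covE: "S \<subseteq> V \<Longrightarrow> covered C S \<subseteq> E"
  using CE by (auto simp: covered_def)
lemma cov_fin: "S \<subseteq> V \<Longrightarrow> finite (covered C S)"
  using covE finE finite_subset by blast

lemma s1: "set_pmf \<sigma>1 \<subseteq> P1" and s2: "set_pmf \<sigma>2 \<subseteq> P2"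
  using ne by (auto simp: nash_eq_def mixed_def)

lemma sum1: "(\<Sum>S\<in>P1. pmf \<sigma>1 S) = 1"
  using fin1 s1 by (rule sum_pmf_eq_1)
lemma sum2: "(\<Sum>T\<in>P2. pmf \<sigma>2 T) = 1"
  using fin2 s2 by (rule sum_pmf_eq_1)

lemma U1_dev:
  assumes "set_pmf \<tau> \<subseteq> P1"
  shows "U1 C \<tau> \<sigma>2 = (\<Sum>S\<in>P1. pmf \<tau> S * g S)"
proof -
  have "U1 C \<tau> \<sigma>2 = (\<Sum>S\<in>P1. \<Sum>T\<in>P2. pmf \<tau> S * pmf \<sigma>2 T * real (detF C S T))"
    unfolding U1_def using fin1 fin2 assms s2 by (subst expect_sum) auto
  also have "\<dots> = (\<Sum>S\<in>P1. pmf \<tau> S * g S)"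
  proof (rule sum.cong)
    fix S assume S: "S \<in> P1"
    have fc: "finite (covered C S)" using P1D[OF S] cov_fin by blast
    have "(\<Sum>T\<in>P2. pmf \<tau> S * pmf \<sigma>2 T * real (detF C S T))
        = pmf \<tau> S * (\<Sum>T\<in>P2. \<Sum>e\<in>covered C S. pmf \<sigma>2 T * (if e \<in> T then 1 else 0))"
      by (simp add: detF_def card_as_sum[OF fc] sum_distrib_left mult.assoc)
    also have "\<dots> = pmf \<tau> S * g S"
      unfolding g_def r_def by (subst sum.swap) simp
    finally show "(\<Sum>T\<in>P2. pmf \<tau> S * pmf \<sigma>2 T * real (detF C S T)) = pmf \<tau> S * g S" .
  qed simp
  finally show ?thesis .
qed

lemma Ecard:
  assumes "set_pmf \<tau> \<subseteq> P2"
  shows "measure_pmf.expectation (pair_pmf \<sigma>1 \<tau>) (\<lambda>(S, T). real (card T))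
     = (\<Sum>T\<in>P2. pmf \<tau> T * card T)"
proof -
  have "measure_pmf.expectation (pair_pmf \<sigma>1 \<tau>) (\<lambda>(S, T). real (card T))
      = (\<Sum>S\<in>P1. \<Sum>T\<in>P2. pmf \<sigma>1 S * pmf \<tau> T * card T)"
    using fin1 fin2 assms s1 by (subst expect_sum) auto
  also have "\<dots> = (\<Sum>S\<in>P1. pmf \<sigma>1 S) * (\<Sum>T\<in>P2. pmf \<tau> T * card T)"
    by (simp add: sum_product mult.assoc)
  finally show ?thesis using sum1 by simp
qed

lemma U1_att:
  assumes "set_pmf \<tau> \<subseteq> P2"
  shows "U1 C \<sigma>1 \<tau> = (\<Sum>T\<in>P2. pmf \<tau> T * (\<Sum>e\<in>T. p e))"
proof -
  have "U1 C \<sigma>1 \<tau> = (\<Sum>S\<in>P1. \<Sum>T\<in>P2. pmf \<sigma>1 S * pmf \<tau> T * real (detF C S T))"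
    unfolding U1_def using fin1 fin2 assms s1 by (subst expect_sum) auto
  also have "\<dots> = (\<Sum>T\<in>P2. \<Sum>S\<in>P1. pmf \<sigma>1 S * pmf \<tau> T * real (detF C S T))"
    by (rule sum.swap)
  also have "\<dots> = (\<Sum>T\<in>P2. pmf \<tau> T * (\<Sum>e\<in>T. p e))"
  proof (rule sum.cong)
    fix T assume T: "T \<in> P2"
    have fc: "finite T" using P2D[OF T] by blast
    have "(\<Sum>S\<in>P1. pmf \<sigma>1 S * pmf \<tau> T * real (detF C S T))
        = pmf \<tau> T * (\<Sum>S\<in>P1. \<Sum>e\<in>T. pmf \<sigma>1 S * (if e \<in> covered C S then 1 else 0))"
      by (simp add: detF_def card_as_sum[OF fc] Int_commute sum_distrib_left mult.assoc mult.left_commute)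
    also have "\<dots> = pmf \<tau> T * (\<Sum>e\<in>T. p e)"
      unfolding p_def by (subst sum.swap) simp
    finally show "(\<Sum>S\<in>P1. pmf \<sigma>1 S * pmf \<tau> T * real (detF C S T)) = pmf \<tau> T * (\<Sum>e\<in>T. p e)" .
  qed simp
  finally show ?thesis .
qed

lemma U2_dev:
  assumes "set_pmf \<tau> \<subseteq> P2"
  shows "U2 C \<sigma>1 \<tau> = (\<Sum>T\<in>P2. pmf \<tau> T * h T)"
proof -
  have "U2 C \<sigma>1 \<tau> = (\<Sum>T\<in>P2. pmf \<tau> T * card T) - (\<Sum>T\<in>P2. pmf \<tau> T * (\<Sum>e\<in>T. p e))"
    unfolding U2_def using Ecard[OF assms] U1_att[OF assms] by simp
  also have "\<dots> = (\<Sum>T\<in>P2. pmf \<tau> T * h T)"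
    unfolding sum_subtractf[symmetric]
  proof (rule sum.cong)
    fix T assume T: "T \<in> P2"
    have fc: "finite T" using P2D[OF T] by blast
    show "pmf \<tau> T * real (card T) - pmf \<tau> T * (\<Sum>e\<in>T. p e) = pmf \<tau> T * h T"
      unfolding h_def using fc by (simp add: sum_subtractf right_diff_distrib)
  qed simp
  finally show ?thesis .
qed

definition "U1v = (\<Sum>S\<in>P1. pmf \<sigma>1 S * g S)"
definition "U2v = (\<Sum>T\<in>P2. pmf \<sigma>2 T * h T)"

lemma U_sum: "U1v + U2v \<le> b2"
proof -
  have "U1v + U2v = (\<Sum>T\<in>P2. pmf \<sigma>2 T * card T)"
    using U1_dev[OF s1] U2_dev[OF s2] Ecard[OF s2] unfolding U1v_def U2v_def U2_def by simp
  also have "\<dots> \<le> (\<Sum>T\<in>P2. pmf \<sigma>2 T * b2)"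
    by (intro sum_mono mult_left_mono) (auto dest: P2D)
  also have "\<dots> = b2" using sum2 by (simp add: sum_distrib_right[symmetric])
  finally show ?thesis .
qed

lemma g_le: assumes "S \<in> P1" shows "g S \<le> U1v"
proof -
  have "set_pmf (return_pmf S) \<subseteq> P1" using assms by simp
  hence "U1 C (return_pmf S) \<sigma>2 \<le> U1 C \<sigma>1 \<sigma>2"
    using ne by (auto simp: nash_eq_def mixed_def)
  moreover have "U1 C (return_pmf S) \<sigma>2 = g S"
    using U1_dev[of "return_pmf S"] assms fin1 by (simp add: indicator_def)
  ultimately show ?thesis using U1_dev[OF s1] unfolding U1v_def by simp
qed

lemma h_le: assumes "T \<in> P2" shows "h T \<le> U2v"
proof -
  have "set_pmf (return_pmf T) \<subseteq> P2" using assms by simp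
  hence "U2 C \<sigma>1 (return_pmf T) \<le> U2 C \<sigma>1 \<sigma>2"
    using ne by (auto simp: nash_eq_def mixed_def)
  moreover have "U2 C \<sigma>1 (return_pmf T) = h T"
    using U2_dev[of "return_pmf T"] assms fin2 by (simp add: indicator_def)
  ultimately show ?thesis using U2_dev[OF s2] unfolding U2v_def by simp
qed

lemma g_eq: assumes "S \<in> set_pmf \<sigma>1" shows "g S = U1v"
proof -
  have "(\<Sum>S\<in>P1. pmf \<sigma>1 S * (U1v - g S)) = U1v - U1v"
    using sum1 unfolding U1v_def
    by (simp add: right_diff_distrib sum_subtractf sum_distrib_right[symmetric])
  hence z: "(\<Sum>S\<in>P1. pmf \<sigma>1 S * (U1v - g S)) = 0" by simp
  have "\<forall>S\<in>P1. pmf \<sigma>1 S * (U1v - g S) = 0"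
    using z fin1 g_le by (subst sum_nonneg_eq_0_iff[symmetric]) auto
  moreover have "S \<in> P1" "pmf \<sigma>1 S > 0" using assms s1 pmf_positive by auto
  ultimately show ?thesis by auto
qed

lemma h_eq: assumes "T \<in> set_pmf \<sigma>2" shows "h T = U2v"
proof -
  have "(\<Sum>T\<in>P2. pmf \<sigma>2 T * (U2v - h T)) = U2v - U2v"
    using sum2 unfolding U2v_def
    by (simp add: right_diff_distrib sum_subtractf sum_distrib_right[symmetric])
  hence z: "(\<Sum>T\<in>P2. pmf \<sigma>2 T * (U2v - h T)) = 0" by simp
  have "\<forall>T\<in>P2. pmf \<sigma>2 T * (U2v - h T) = 0"
    using z fin2 h_le by (subst sum_nonneg_eq_0_iff[symmetric]) auto
  moreover have "T \<in> P2" "pmf \<sigma>2 T > 0" using assms s2 pmf_positive by auto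
  ultimately show ?thesis by auto
qed

lemma p_nonneg: "0 \<le> p e" unfolding p_def by (intro sum_nonneg) auto
lemma r_nonneg: "0 \<le> r e" unfolding r_def by (intro sum_nonneg) auto

lemma p_zero: assumes "\<And>S. S \<in> set_pmf \<sigma>1 \<Longrightarrow> e \<notin> covered C S" shows "p e = 0"
  unfolding p_def using assms by (intro sum.neutral) (auto simp: set_pmf_iff)

lemma p_one: assumes "\<And>S. S \<in> set_pmf \<sigma>1 \<Longrightarrow> e \<in> covered C S" shows "p e = 1"
proof -
  have "p e = (\<Sum>S\<in>P1. pmf \<sigma>1 S)"
    unfolding p_def using assms by (intro sum.cong) (auto simp: set_pmf_iff)
  thus ?thesis using sum1 by simp
qed

lemma r_one: assumes "\<And>T. T \<in> set_pmf \<sigma>2 \<Longrightarrow> e \<in> T" shows "r e = 1"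
proof -
  have "r e = (\<Sum>T\<in>P2. pmf \<sigma>2 T)"
    unfolding r_def using assms by (intro sum.cong) (auto simp: set_pmf_iff)
  thus ?thesis using sum2 by simp
qed

lemma p_le: assumes "S \<in> set_pmf \<sigma>1" "e \<notin> covered C S" shows "p e \<le> 1 - pmf \<sigma>1 S"
proof -
  have S: "S \<in> P1" using assms s1 by auto
  have "p e = (\<Sum>S'\<in>P1 - {S}. pmf \<sigma>1 S' * (if e \<in> covered C S' then 1 else 0))"
    unfolding p_def using S fin1 assms(2) by (subst sum.remove[of _ S]) auto
  also have "\<dots> \<le> (\<Sum>S'\<in>P1 - {S}. pmf \<sigma>1 S')"
    by (intro sum_mono) auto
  also have "\<dots> = 1 - pmf \<sigma>1 S" using sum1 S fin1 by (simp add: sum_diff1)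
  finally show ?thesis .
qed

lemma r_ge: assumes "T \<in> set_pmf \<sigma>2" "e \<in> T" shows "pmf \<sigma>2 T \<le> r e"
proof -
  have T: "T \<in> P2" using assms s2 by auto
  have "pmf \<sigma>2 T = pmf \<sigma>2 T * (if e \<in> T then 1 else 0)" using assms by simp
  also have "\<dots> \<le> r e" unfolding r_def
    by (rule member_le_sum[OF T]) (auto simp: fin2)
  finally show ?thesis .
qed

lemma not_cover: assumes "S \<in> P1" shows "covered C S \<noteq> E"
proof
  assume c: "covered C S = E"
  have "is_set_cover V E C S" using c P1D[OF assms] by (simp add: is_set_cover_def)
  moreover have "finite (card ` {S. is_set_cover V E C S})"
    by (rule finite_imageI, rule finite_subset[of _ "Pow V"]) (auto simp: is_set_cover_def finV)
  ultimately have "n_star V E C \<le> card S" unfolding n_star_def by (intro Min_le) auto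
  thus False using nstar P1D[OF assms] by simp
qed

lemma packing_bound: "U1v < b1"
proof -
  have finP: "finite {T. is_set_packing V E C T}"
    by (rule finite_subset[of _ "Pow E"]) (auto simp: is_set_packing_def finE)
  have "{} \<in> {T. is_set_packing V E C T}" by (simp add: is_set_packing_def)
  hence "m_star V E C \<in> card ` {T. is_set_packing V E C T}"
    unfolding m_star_def using finP by (intro Max_in) auto
  then obtain P where P: "is_set_packing V E C P" "b2 < card P" using mstar by auto
  have finPP: "finite P" using P(1) finE by (auto simp: is_set_packing_def intro: finite_subset)
  obtain Q where Q: "Q \<subseteq> P" "card Q = Suc b2"
    using obtain_subset_with_card_n[of "Suc b2" P] P(2) by auto
  have finQ: "finite Q" using Q finPP finite_subset by blast
  have QE: "Q \<subseteq> E" using Q P(1) by (auto simp: is_set_packing_def)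
  have ciQ: "card (C i \<inter> Q) \<le> 1" if "i \<in> V" for i
    using P(1) that Q(1) finPP by (auto simp: is_set_packing_def intro: le_trans[OF card_mono])
  have covQ: "card (covered C S \<inter> Q) \<le> b1" if S: "S \<in> P1" for S
  proof -
    have "covered C S \<inter> Q = (\<Union>i\<in>S. C i \<inter> Q)" by (auto simp: covered_def)
    hence "card (covered C S \<inter> Q) \<le> (\<Sum>i\<in>S. card (C i \<inter> Q))"
      using card_UN_le[of S "\<lambda>i. C i \<inter> Q"] P1D[OF S] by simp
    also have "\<dots> \<le> (\<Sum>i\<in>S. 1)" using P1D[OF S] ciQ by (intro sum_mono) auto
    finally show ?thesis using P1D[OF S] by simp
  qed
  define Qs where "Qs = (\<Sum>x\<in>Q. p x)"
  have "Qs = (\<Sum>S\<in>P1. pmf \<sigma>1 S * (\<Sum>x\<in>Q. if x \<in> covered C S then 1 else 0))"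
    unfolding Qs_def p_def by (subst sum.swap) (simp add: sum_distrib_left)
  also have "\<dots> = (\<Sum>S\<in>P1. pmf \<sigma>1 S * card (Q \<inter> covered C S))"
    by (simp add: card_as_sum[OF finQ])
  also have "\<dots> \<le> (\<Sum>S\<in>P1. pmf \<sigma>1 S * b1)"
    using covQ by (intro sum_mono mult_left_mono) (auto simp: Int_commute)
  also have "\<dots> = b1" using sum1 by (simp add: sum_distrib_right[symmetric])
  finally have Qs_le: "Qs \<le> b1" .
  have hQ: "h (Q - {e}) = (Suc b2 - Qs) - (1 - p e)" if e: "e \<in> Q" for e
  proof -
    have "h (Q - {e}) = h Q - (1 - p e)" unfolding h_def using e finQ by (simp add: sum_diff1)
    moreover have "h Q = Suc b2 - Qs" unfolding h_def Qs_def using Q(2) by (simp add: sum_subtractf)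
    ultimately show ?thesis by simp
  qed
  have "(\<Sum>e\<in>Q. h (Q - {e})) \<le> (\<Sum>e\<in>Q. U2v)"
  proof (intro sum_mono h_le)
    fix e assume "e \<in> Q"
    thus "Q - {e} \<in> P2" using QE Q(2) finQ by (auto simp: A2_def)
  qed
  moreover have "(\<Sum>e\<in>Q. h (Q - {e})) = Suc b2 * (Suc b2 - Qs) - (Suc b2 - Qs)"
  proof -
    have "(\<Sum>e\<in>Q. h (Q - {e})) = (\<Sum>e\<in>Q. (Suc b2 - Qs) - (1 - p e))"
      by (rule sum.cong[OF refl hQ])
    also have "\<dots> = card Q * (Suc b2 - Qs) - (card Q - Qs)"
      unfolding sum_subtractf Qs_def by (simp add: algebra_simps)
    finally show ?thesis using Q(2) by simp
  qed
  ultimately have "Suc b2 * (Suc b2 - Qs) - (Suc b2 - Qs) \<le> Suc b2 * U2v"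
    using Q(2) by simp
  hence A: "real b2 * (Suc b2 - Qs) \<le> Suc b2 * U2v" by (simp add: algebra_simps)
  have B: "real b2 * (real (Suc b2) - real b1) \<le> real b2 * (Suc b2 - Qs)"
    using Qs_le by (intro mult_left_mono) auto
  have "Suc b2 * U1v \<le> Suc b2 * (b2 - U2v)" using U_sum by (intro mult_left_mono) auto
  hence "Suc b2 * U1v \<le> real b2 * b1" using A B by (simp add: algebra_simps)
  also have "\<dots> < Suc b2 * real b1" using b1pos by (intro mult_strict_right_mono) auto
  finally show ?thesis by (simp add: mult_less_cancel_left_pos)
qed

lemma swap:
  assumes u: "u \<in> E" and S: "S \<in> set_pmf \<sigma>1" and nu: "u \<notin> covered C S" and ru: "r u = 1"
  shows False
proof -
  obtain i where i: "i \<in> V" "u \<in> C i" using cov u by blast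
  have SP: "S \<in> P1" using S s1 by auto
  note SD = P1D[OF SP]
  have gS: "g S = U1v" using g_eq S .
  have ins: "g S' + 1 \<le> g (insert i S')" if "S' \<subseteq> S" for S'
  proof -
    have S'V: "S' \<subseteq> V" using that SD by auto
    have uS': "u \<notin> covered C S'" using nu that by (auto simp: covered_def)
    have "insert u (covered C S') \<subseteq> covered C (insert i S')" using i by (auto simp: covered_def)
    moreover have "finite (covered C (insert i S'))" using cov_fin[of "insert i S'"] S'V i by auto
    ultimately have "(\<Sum>e\<in>insert u (covered C S'). r e) \<le> g (insert i S')"
      unfolding g_def by (intro sum_mono2) (auto simp: r_nonneg)
    moreover have "(\<Sum>e\<in>insert u (covered C S'). r e) = r u + g S'"
      unfolding g_def using uS' cov_fin[OF S'V] by simp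
    ultimately show ?thesis using ru by simp
  qed
  show False
  proof (cases "card S < b1")
    case True
    have "insert i S \<in> P1" using True SD i by (auto simp: A1_def card_insert_if)
    hence "g (insert i S) \<le> U1v" by (rule g_le)
    thus False using ins[of S] gS packing_bound by simp
  next
    case False
    hence cS: "card S = b1" using SD by simp
    define D where "D j = covered C S - covered C (S - {j})" for j
    have gd: "(\<Sum>e\<in>D j. r e) = g S - g (S - {j})" for j
      unfolding D_def g_def
      by (rule sum_diff) (use cov_fin[of S] SD in \<open>auto simp: covered_def\<close>)
    have disj: "(\<Sum>j\<in>S. (\<Sum>e\<in>D j. r e)) = (\<Sum>e\<in>(\<Union>j\<in>S. D j). r e)"
    proof (rule sum.UNION_disjoint[symmetric])
      show "finite S" using SD by blast
      show "\<forall>j\<in>S. finite (D j)" unfolding D_def using cov_fin[of S] SD by auto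
      show "\<forall>j\<in>S. \<forall>k\<in>S. j \<noteq> k \<longrightarrow> D j \<inter> D k = {}"
        unfolding D_def covered_def by blast
    qed
    have "(\<Sum>e\<in>(\<Union>j\<in>S. D j). r e) \<le> g S"
      unfolding g_def using cov_fin SD by (intro sum_mono2) (auto simp: D_def r_nonneg)
    hence marg: "(\<Sum>j\<in>S. (g S - g (S - {j}))) \<le> g S" using disj gd by simp
    have each: "g (S - {j}) + 1 \<le> U1v" if j: "j \<in> S" for j
    proof -
      have "card (S - {j}) = b1 - 1" using j cS SD by simp
      hence "insert i (S - {j}) \<in> P1" using SD i b1pos by (auto simp: A1_def card_insert_if)
      hence "g (insert i (S - {j})) \<le> U1v" by (rule g_le)
      thus ?thesis using ins[of "S - {j}"] by simp
    qed
    have "(\<Sum>j\<in>S. g (S - {j}) + 1) \<le> (\<Sum>j\<in>S. U1v)" using each by (rule sum_mono)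
    hence "(\<Sum>j\<in>S. g (S - {j})) + b1 \<le> b1 * U1v" using cS by (simp add: sum.distrib)
    moreover have "(\<Sum>j\<in>S. (g S - g (S - {j}))) = b1 * g S - (\<Sum>j\<in>S. g (S - {j}))"
      using cS by (simp add: sum_subtractf)
    ultimately have "b1 \<le> g S" using marg gS by simp
    thus False using gS packing_bound by simp
  qed
qed

lemma claim1: "is_set_cover V E C (node_basis V \<sigma>1)"
proof (rule ccontr)
  let ?B = "node_basis V \<sigma>1"
  have BV: "?B \<subseteq> V" by (auto simp: node_basis_def)
  assume nc: "\<not> is_set_cover V E C ?B"
  hence "covered C ?B \<noteq> E" using BV by (simp add: is_set_cover_def)
  with covE[OF BV] obtain u where u: "u \<in> E" "u \<notin> covered C ?B" by blast
  have nuS: "u \<notin> covered C S" if S: "S \<in> set_pmf \<sigma>1" for S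
  proof
    assume "u \<in> covered C S"
    then obtain i where i: "i \<in> S" "u \<in> C i" by (auto simp: covered_def)
    have iV: "i \<in> V" using S s1 i P1D by blast
    have "0 < pmf \<sigma>1 S" using S by (simp add: pmf_positive_iff)
    also have "pmf \<sigma>1 S = measure_pmf.prob \<sigma>1 {S}" by (simp add: measure_pmf_single)
    also have "\<dots> \<le> measure_pmf.prob \<sigma>1 {S. i \<in> S}"
      using i by (intro measure_pmf.finite_measure_mono) auto
    finally have "i \<in> ?B" using iV by (simp add: node_basis_def)
    thus False using u i by (auto simp: covered_def)
  qed
  have pu: "p u = 0" using nuS by (rule p_zero)
  show False
  proof (cases "\<forall>T\<in>set_pmf \<sigma>2. u \<in> T")
    case True
    have ru: "r u = 1" using True by (intro r_one) auto
    obtain S where S: "S \<in> set_pmf \<sigma>1" using set_pmf_not_empty by fast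
    show False using swap[OF u(1) S nuS[OF S] ru] .
  next
    case False
    then obtain T0 where T0: "T0 \<in> set_pmf \<sigma>2" "u \<notin> T0" by blast
    have T0P: "T0 \<in> P2" using T0 s2 by auto
    note TD = P2D[OF T0P]
    have hT0: "h T0 = U2v" using h_eq T0(1) .
    show False
    proof (cases "card T0 < b2")
      case True
      have "insert u T0 \<in> P2" using True TD u by (auto simp: A2_def card_insert_if)
      hence "h (insert u T0) \<le> U2v" by (rule h_le)
      moreover have "h (insert u T0) = 1 + h T0" unfolding h_def using TD T0(2) pu by simp
      ultimately show False using hT0 by simp
    next
      case False
      hence cT: "card T0 = b2" using TD by simp
      show False
      proof (cases "\<exists>e\<in>T0. p e > 0")
        case True
        then obtain e where e: "e \<in> T0" "p e > 0" by blast
        let ?T = "insert u (T0 - {e})"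
        have "card (T0 - {e}) = b2 - 1" using e cT TD by simp
        hence "?T \<in> P2" using TD u e b2pos by (auto simp: A2_def card_insert_if)
        hence "h ?T \<le> U2v" by (rule h_le)
        moreover have "h ?T = 1 + (h T0 - (1 - p e))"
          unfolding h_def using TD T0(2) pu e by (simp add: sum_diff1)
        ultimately show False using hT0 e by simp
      next
        case False
        hence "\<forall>e\<in>T0. p e = 0" using p_nonneg by (metis less_eq_real_def)
        hence "h T0 = b2" unfolding h_def using cT by simp
        hence U1z: "U1v \<le> 0" using hT0 U_sum by simp
        have "T0 \<noteq> {}" using cT b2pos by auto
        then obtain e0 where e0: "e0 \<in> T0" by blast
        obtain i where i: "i \<in> V" "e0 \<in> C i" using cov TD e0 by blast
        have "{i} \<in> P1" using i b1pos by (auto simp: A1_def)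
        hence "g {i} \<le> U1v" by (rule g_le)
        moreover have "r e0 \<le> g {i}" unfolding g_def
          using i CE finE by (intro member_le_sum) (auto simp: covered_def r_nonneg intro: finite_subset)
        moreover have "pmf \<sigma>2 T0 \<le> r e0" by (rule r_ge[OF T0(1) e0])
        moreover have "pmf \<sigma>2 T0 > 0" using T0(1) by (simp add: pmf_positive_iff)
        ultimately show False using U1z by simp
      qed
    qed
  qed
qed

lemma no_pure1: "\<sigma>1 \<noteq> return_pmf S"
proof
  assume eq: "\<sigma>1 = return_pmf S"
  have SP: "S \<in> P1" using s1 eq by auto
  have "node_basis V \<sigma>1 = S" using eq P1D[OF SP] by (auto simp: node_basis_def indicator_def)
  with claim1 have "covered C S = E" by (simp add: is_set_cover_def)
  thus False using not_cover[OF SP] by simp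
qed

lemma no_pure2: "\<sigma>2 \<noteq> return_pmf T0"
proof
  assume eq: "\<sigma>2 = return_pmf T0"
  have T0s: "T0 \<in> set_pmf \<sigma>2" by (simp add: eq)
  show False
  proof (cases "\<exists>S\<in>set_pmf \<sigma>1. \<exists>e\<in>T0. e \<notin> covered C S")
    case True
    then obtain S e where S: "S \<in> set_pmf \<sigma>1" "e \<in> T0" "e \<notin> covered C S" by blast
    have "r e = 1" using S(2) eq by (intro r_one) auto
    moreover have "e \<in> E" using T0s s2 S(2) P2D by blast
    ultimately show False using swap S by blast
  next
    case False
    hence "\<forall>e\<in>T0. p e = 1" by (auto intro: p_one)
    hence "h T0 = 0" unfolding h_def by simp
    hence U2z: "U2v = 0" using h_eq T0s by simp
    obtain S where S: "S \<in> set_pmf \<sigma>1" using set_pmf_not_empty by fast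
    have SP: "S \<in> P1" using S s1 by auto
    obtain e where e: "e \<in> E" "e \<notin> covered C S" using not_cover[OF SP] covE P1D[OF SP] by blast
    have "{e} \<in> P2" using e b2pos by (auto simp: A2_def)
    hence "h {e} \<le> U2v" by (rule h_le)
    moreover have "h {e} = 1 - p e" by (simp add: h_def)
    moreover have "p e \<le> 1 - pmf \<sigma>1 S" using p_le S e(2) .
    moreover have "pmf \<sigma>1 S > 0" using S by (simp add: pmf_positive_iff)
    ultimately show False using U2z by simp
  qed
qed

end

theorem proposition3:
  fixes V :: "'v set" and E :: "'e set" and C :: "'v \<Rightarrow> 'e set" and b1 b2 :: nat
  assumes "detection_model V E C"
    and "0 < b1" and "0 < b2"
    and "b1 < n_star V E C" and "b2 < m_star V E C"
  shows "(\<forall>\<sigma>1 \<sigma>2. nash_eq V E C b1 b2 \<sigma>1 \<sigma>2 \<longrightarrow>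
            is_set_cover V E C (node_basis V \<sigma>1)) \<and>
         \<not> (\<exists>\<sigma>1 \<sigma>2. nash_eq V E C b1 b2 \<sigma>1 \<sigma>2 \<and>
               ((\<exists>S. \<sigma>1 = return_pmf S) \<or> (\<exists>T. \<sigma>2 = return_pmf T)))"
proof -
  have G: "game V E C b1 b2 \<sigma>1 \<sigma>2" if "nash_eq V E C b1 b2 \<sigma>1 \<sigma>2" for \<sigma>1 \<sigma>2
    using assms that by unfold_locales auto
  show ?thesis
    using game.claim1[OF G] game.no_pure1[OF G] game.no_pure2[OF G] by blast
qed

end
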